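(* Let $\alpha\in\mathbb R$ and let $V_\alpha:L^2(\mu)\to L^2(\mu_\alpha)$ be the unitary operator described in the context. Then for every compactly supported $C^1$ function $f$ on $\mathbb R$, $$V_\alpha f(s)=f(s)-\alpha\int_{\mathbb R}\frac{f(s)-f(t)}{s-t}\,d\mu(t)\qquad(\mu_\alpha\text{-a.e. } s),$$ where the integrand at $t=s$ is interpreted as $f'(s)$.
   Context: Let $\mu$ be a nonzero positive Borel measure on $\mathbb R$ with $\int_{\mathbb R}(1+|t|)^{-1}\,d\mu(t)<\infty$, and let $M_t$ denote multiplication by the independent variable $t$ on $L^2(\mu)$. For $\alpha\in\mathbb R$, $A_\alpha$ denotes the (possibly singular, form-bounded) rank one perturbation "$A_\alpha=M_t+\alpha(\,\cdot\,,\mathbf 1)\mathbf 1$", rigorously defined as the self-adjoint operator on $L^2(\mu)$ whose resolvent is, for $\lambda\in\mathbb C\setminus\mathbb R$, $$(A_\alpha-\lambda I)^{-1}f=(M_t-\lambda I)^{-1}f-\frac{\alpha\int\frac{f(t)\,d\mu(t)}{t-\lambda}}{1+\alpha F(\lambda)}\,(M_t-\lambda I)^{-1}\mathbf 1,\qquad F(\lambda)=\int_{\mathbb R}\frac{d\mu(t)}{t-\lambda},$$ and also $(A_\alpha-\lambda I)^{-1}\mathbf 1:=\frac{1}{1+\alpha F(\lambda)}(M_t-\lambda I)^{-1}\mathbf 1$. Let $\mu_\alpha$ be the spectral measure of $A_\alpha$ with respect to $\mathbf 1$, i.e. the unique positive Borel measure with $\frac{F(\lambda)}{1+\alpha F(\lambda)}=\int_{\mathbb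 R}\frac{d\mu_\alpha(s)}{s-\lambda}$ for $\lambda\notin\mathbb R$, and let $M_s$ be multiplication by the independent variable $s$ on $L^2(\mu_\alpha)$. $V_\alpha:L^2(\mu)\to L^2(\mu_\alpha)$ is the unitary operator realizing the spectral representation of $A_\alpha$ with $\mathbf 1\mapsto\mathbf 1$, i.e. $V_\alpha(A_\alpha-\lambda I)^{-1}=(M_s-\lambda I)^{-1}V_\alpha$ and $V_\alpha(A_\alpha-\lambda I)^{-1}\mathbf 1=(M_s-\lambda I)^{-1}\mathbf 1$ for all $\lambda\in\mathbb C\setminus\mathbb R$. *)

theory Defs
  imports "HOL-Analysis.Analysis"
begin

definition cauchy_transform :: "real measure \<Rightarrow> complex \<Rightarrow> complex" where
  "cauchy_transform M z = (\<integral>t. 1 / (complex_of_real t - z) \<partial>M)"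

definition sq_int :: "real measure \<Rightarrow> (real \<Rightarrow> complex) \<Rightarrow> bool" where
  "sq_int M f \<longleftrightarrow> f \<in> borel_measurable M \<and> integrable M (\<lambda>t. (cmod (f t))\<^sup>2)"

text \<open>The resolvent (A_alpha - z)^{-1} f, given by the explicit formula of the context.\<close>
definition res_A :: "real measure \<Rightarrow> real \<Rightarrow> complex \<Rightarrow> (real \<Rightarrow> complex) \<Rightarrow> (real \<Rightarrow> complex)" where
  "res_A M \<alpha> z f = (\<lambda>t. f t / (complex_of_real t - z)
      - (complex_of_real \<alpha> * (\<integral>u. f u / (complex_of_real u - z) \<partial>M))
          / (1 + complex_of_real \<alpha> * cauchy_transform M z)
        * (1 / (complex_of_real t - z)))"

text \<open>The vector (A_alpha - z)^{-1} 1, as defined in the context.\<close>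
definition res_A_one :: "real measure \<Rightarrow> real \<Rightarrow> complex \<Rightarrow> (real \<Rightarrow> complex)" where
  "res_A_one M \<alpha> z = (\<lambda>t. 1 / (1 + complex_of_real \<alpha> * cauchy_transform M z)
        * (1 / (complex_of_real t - z)))"

end

theory Submission
  imports Defs
begin

lemma mvt_bound:
  fixes f f' :: "real \<Rightarrow> complex"
  assumes d: "\<And>x. (f has_vector_derivative f' x) (at x)" and b: "\<And>x. norm (f' x) \<le> L"
  shows "norm (f t - f x) \<le> L * \<bar>t - x\<bar>"
proof -
  have *: "norm (f b - f a) \<le> L * (b - a)" if "a < b" for a b
  proof -
    have c: "continuous_on {a..b} f"
      using d by (meson continuous_at_imp_continuous_on has_vector_derivative_continuous)
    have "norm (f b - f a) \<le> L * b - L * a"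
      by (rule differentiable_bound_general[OF that c, of "\<lambda>y. L * y" f' "\<lambda>_. L"])
         (auto intro!: continuous_intros derivative_eq_intros d b)
    then show ?thesis by (simp add: algebra_simps)
  qed
  show ?thesis
  proof (cases "x < t")
    case True then show ?thesis using *[OF True] by simp
  next
    case False
    show ?thesis
    proof (cases "t < x")
      case True then show ?thesis using *[OF True] by (simp add: norm_minus_commute)
    next
      case False then show ?thesis using \<open>\<not> x < t\<close> by simp
    qed
  qed
qed

lemma quot_tendsto:
  fixes f :: "real \<Rightarrow> complex"
  assumes "(f has_vector_derivative D) (at x)"
  shows "((\<lambda>y. (f y - f x) / complex_of_real (y - x)) \<longlongrightarrow> D) (at x)"
proof -
  have "((\<lambda>y. norm ((f y - f x) - (y - x) *\<^sub>R D) / norm (y - x)) \<longlongrightarrow> 0) (at x)"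
    using assms unfolding has_vector_derivative_def has_derivative_iff_norm by simp
  then have "((\<lambda>y. norm ((f y - f x) / complex_of_real (y - x) - D)) \<longlongrightarrow> 0) (at x)"
  proof (rule Lim_transform_eventually)
    show "\<forall>\<^sub>F y in at x. norm ((f y - f x) - (y - x) *\<^sub>R D) / norm (y - x) =
        norm ((f y - f x) / complex_of_real (y - x) - D)"
      unfolding eventually_at_filter
    proof (intro always_eventually allI impI)
      fix y assume "y \<noteq> x" "y \<in> UNIV"
      then have ne: "complex_of_real (y - x) \<noteq> 0" by simp
      have "(f y - f x) / complex_of_real (y - x) - D = ((f y - f x) - (y - x) *\<^sub>R D) / complex_of_real (y - x)"
        using ne by (simp add: field_simps scaleR_conv_of_real)
      then show "norm ((f y - f x) - (y - x) *\<^sub>R D) / norm (y - x) =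
        norm ((f y - f x) / complex_of_real (y - x) - D)"
        by (simp add: norm_divide del: of_real_diff)
    qed
  qed
  then have "((\<lambda>y. (f y - f x) / complex_of_real (y - x) - D) \<longlongrightarrow> 0) (at x)"
    by (simp add: tendsto_norm_zero_iff)
  then show ?thesis by (simp add: LIM_zero_iff)
qed

lemma bound_aux:
  fixes q L M R x t :: real
  assumes "0 \<le> L" "0 \<le> M" "0 \<le> R" "\<bar>x\<bar> \<le> R" "q \<le> L" "t \<noteq> x \<Longrightarrow> q \<le> 2 * M / \<bar>t - x\<bar>"
  shows "q \<le> (L * (2 * R + 3) + 8 * M) * (1 / (1 + \<bar>t\<bar>))"
proof (cases "\<bar>t\<bar> \<le> 2 * R + 2")
  case True
  have "q \<le> L" by fact
  also have "L \<le> L * (2 * R + 3) / (1 + \<bar>t\<bar>)"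
  proof -
    have "L * (1 + \<bar>t\<bar>) \<le> L * (2 * R + 3)" using True assms by (intro mult_left_mono) auto
    then show ?thesis by (simp add: field_simps)
  qed
  also have "\<dots> \<le> (L * (2 * R + 3) + 8 * M) * (1 / (1 + \<bar>t\<bar>))"
    using assms by (simp add: divide_right_mono field_simps)
  finally show ?thesis .
next
  case False
  then have tx: "\<bar>t - x\<bar> \<ge> \<bar>t\<bar> / 2" "\<bar>t\<bar> \<ge> 1" using assms by (auto simp: abs_if split: if_splits)
  then have "t \<noteq> x" by auto
  then have "q \<le> 2 * M / \<bar>t - x\<bar>" using assms by auto
  also have "\<dots> \<le> 2 * M / (\<bar>t\<bar> / 2)"
    using tx assms by (intro divide_left_mono) (auto intro!: mult_pos_pos)
  also have "\<dots> \<le> 8 * M / (1 + \<bar>t\<bar>)"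
  proof -
    have "M * 1 \<le> M * \<bar>t\<bar>" using tx assms by (intro mult_left_mono) auto
    then show ?thesis using tx assms by (simp add: field_simps)
  qed
  also have "\<dots> \<le> (L * (2 * R + 3) + 8 * M) * (1 / (1 + \<bar>t\<bar>))"
    using assms by (simp add: divide_right_mono field_simps)
  finally show ?thesis .
qed

lemma kbound:
  fixes z :: complex and t :: real
  assumes "Im z \<noteq> 0"
  shows "cmod (1 / (complex_of_real t - z)) \<le> (1 + (1 + cmod z) / \<bar>Im z\<bar>) * (1 / (1 + \<bar>t\<bar>))"
proof -
  define d where "d = cmod (complex_of_real t - z)"
  have d1: "\<bar>Im z\<bar> \<le> d" unfolding d_def
    using abs_Im_le_cmod[of "complex_of_real t - z"] by simp
  have d2: "\<bar>t\<bar> \<le> d + cmod z" unfolding d_def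
    using norm_triangle_ineq[of "complex_of_real t - z" z] by simp
  have dpos: "0 < d" using d1 assms by linarith
  have "1 + \<bar>t\<bar> \<le> (1 + cmod z) + d" using d2 by simp
  also have "1 + cmod z \<le> (1 + cmod z) / \<bar>Im z\<bar> * d"
  proof -
    have "(1 + cmod z) * \<bar>Im z\<bar> \<le> (1 + cmod z) * d" using d1 by (intro mult_left_mono) auto
    then show ?thesis using assms by (simp add: field_simps)
  qed
  finally have "1 + \<bar>t\<bar> \<le> (1 + (1 + cmod z) / \<bar>Im z\<bar>) * d" by (simp add: algebra_simps)
  then have "1 / d \<le> (1 + (1 + cmod z) / \<bar>Im z\<bar>) * (1 / (1 + \<bar>t\<bar>))"
    using dpos by (simp add: field_simps)
  then show ?thesis by (simp add: d_def norm_divide)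
qed

lemma quot_bounds:
  fixes A :: complex and L M d t x :: real
  assumes "cmod A \<le> L * \<bar>t - x\<bar>" "cmod A \<le> 2 * M" "\<bar>t - x\<bar> \<le> d" "0 < d" "0 \<le> L"
  shows "cmod A / d \<le> L" "t \<noteq> x \<Longrightarrow> cmod A / d \<le> 2 * M / \<bar>t - x\<bar>"
proof -
  have "L * \<bar>t - x\<bar> \<le> L * d" using assms by (intro mult_left_mono) auto
  then show "cmod A / d \<le> L" using assms by (simp add: field_simps)
next
  assume "t \<noteq> x"
  then have p: "0 < \<bar>t - x\<bar>" by simp
  have "cmod A / d \<le> cmod A / \<bar>t - x\<bar>" using assms p by (intro divide_left_mono) auto
  also have "\<dots> \<le> 2 * M / \<bar>t - x\<bar>" using assms p by (intro divide_right_mono) auto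
  finally show "cmod A / d \<le> 2 * M / \<bar>t - x\<bar>" .
qed

lemma alg1: fixes a b B d :: complex
  shows "a / d - B * (1 / d) = (a - b) / d + (b - B) * (1 / d)"
  by (cases "d = 0") (simp_all add: field_simps)

theorem theorem2p1:
  fixes \<mu> \<mu>\<alpha> :: "real measure" and \<alpha> :: real
    and V :: "(real \<Rightarrow> complex) \<Rightarrow> (real \<Rightarrow> complex)"
    and f f' :: "real \<Rightarrow> complex"
  assumes mu_borel: "sets \<mu> = sets borel"
    and mu_nonzero: "emeasure \<mu> (space \<mu>) \<noteq> 0"
    and mu_growth: "(\<integral>\<^sup>+ t. ennreal (1 / (1 + \<bar>t\<bar>)) \<partial>\<mu>) < \<infinity>"
    and mua_borel: "sets \<mu>\<alpha> = sets borel"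
    and mua_int: "\<And>z. Im z \<noteq> 0 \<Longrightarrow> integrable \<mu>\<alpha> (\<lambda>s. 1 / (complex_of_real s - z))"
    and mua_transform: "\<And>z. Im z \<noteq> 0 \<Longrightarrow>
          cauchy_transform \<mu> z / (1 + complex_of_real \<alpha> * cauchy_transform \<mu> z)
            = cauchy_transform \<mu>\<alpha> z"
    and V_maps: "\<And>g. sq_int \<mu> g \<Longrightarrow> sq_int \<mu>\<alpha> (V g)"
    and V_linear: "\<And>g h c. sq_int \<mu> g \<Longrightarrow> sq_int \<mu> h \<Longrightarrow>
          AE s in \<mu>\<alpha>. V (\<lambda>t. g t + c * h t) s = V g s + c * V h s"
    and V_isometric: "\<And>g. sq_int \<mu> g \<Longrightarrow>
          (\<integral>s. (cmod (V g s))\<^sup>2 \<partial>\<mu>\<alpha>) = (\<integral>t. (cmod (g t))\<^sup>2 \<partial>\<mu>)"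
    and V_onto: "\<And>h. sq_int \<mu>\<alpha> h \<Longrightarrow> \<exists>g. sq_int \<mu> g \<and> (AE s in \<mu>\<alpha>. V g s = h s)"
    and V_resolvent: "\<And>z g. Im z \<noteq> 0 \<Longrightarrow> sq_int \<mu> g \<Longrightarrow>
          AE s in \<mu>\<alpha>. V (res_A \<mu> \<alpha> z g) s = V g s / (complex_of_real s - z)"
    and V_one: "\<And>z. Im z \<noteq> 0 \<Longrightarrow>
          AE s in \<mu>\<alpha>. V (res_A_one \<mu> \<alpha> z) s = 1 / (complex_of_real s - z)"
    and f_deriv: "\<And>x. (f has_vector_derivative f' x) (at x)"
    and f'_cont: "continuous_on UNIV f'"
    and f_supp: "compact (closure {x. f x \<noteq> 0})"
  shows "AE s in \<mu>\<alpha>. V f s = f s - complex_of_real \<alpha> *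
           (\<integral>t. (if t = s then f' s else (f s - f t) / complex_of_real (s - t)) \<partial>\<mu>)"
proof (cases "AE s in \<mu>\<alpha>. False")
  case True
  then show ?thesis by (rule eventually_mono) simp
next
  case notF: False
  define w :: "real \<Rightarrow> real" where "w = (\<lambda>t. 1 / (1 + \<bar>t\<bar>))"
  have wpos: "\<And>t. 0 < w t" "\<And>t. w t \<le> 1" unfolding w_def by auto
  note mcong = measurable_cong_sets[OF mu_borel refl]
  note mcong2 = measurable_cong_sets[OF mua_borel refl]
  have space_mu: "space \<mu> = UNIV" using sets_eq_imp_space_eq[OF mu_borel] by simp
  have space_mua: "space \<mu>\<alpha> = UNIV" using sets_eq_imp_space_eq[OF mua_borel] by simp
  have wmeas: "w \<in> borel_measurable borel" unfolding w_def by measurable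
  have wint: "integrable \<mu> w"
  proof (rule integrableI_bounded)
    show "w \<in> borel_measurable \<mu>" using wmeas by (simp add: mcong)
    show "(\<integral>\<^sup>+ t. ennreal (norm (w t)) \<partial>\<mu>) < \<infinity>" using mu_growth wpos unfolding w_def by simp
  qed
  have dom: "integrable \<mu> h \<and> sq_int \<mu> h"
    if hm: "h \<in> borel_measurable borel" and hb: "\<And>t. cmod (h t) \<le> K * w t" for h :: "real \<Rightarrow> complex" and K
  proof -
    have hm': "h \<in> borel_measurable \<mu>" using hm by (simp add: mcong)
    have "0 \<le> K * w 0" using hb[of 0] norm_ge_zero[of "h 0"] by linarith
    then have K0: "0 \<le> K" using wpos(1)[of 0] by (simp add: zero_le_mult_iff)
    have i1: "integrable \<mu> h"
      by (rule Bochner_Integration.integrable_bound[of _ "\<lambda>t. K * w t"])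
         (use wint hm' in \<open>auto intro!: AE_I2 simp: abs_of_nonneg K0 less_imp_le[OF wpos(1)] hb\<close>)
    have i2: "integrable \<mu> (\<lambda>t. (cmod (h t))\<^sup>2)"
    proof (rule Bochner_Integration.integrable_bound[of _ "\<lambda>t. K^2 * w t"])
      show "integrable \<mu> (\<lambda>t. K^2 * w t)" using wint by auto
      show "(\<lambda>t. (cmod (h t))\<^sup>2) \<in> borel_measurable \<mu>" using hm' by measurable
      show "AE t in \<mu>. norm ((cmod (h t))\<^sup>2) \<le> norm (K^2 * w t)"
      proof (intro AE_I2)
        fix t
        have "(cmod (h t))\<^sup>2 \<le> (K * w t)\<^sup>2" using hb[of t] by (intro power_mono) auto
        also have "\<dots> = K^2 * (w t * w t)" by (simp add: power2_eq_square)
        also have "\<dots> \<le> K^2 * w t" using wpos[of t] by (intro mult_left_mono) (auto simp: mult_le_cancel_left1)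
        finally show "norm ((cmod (h t))\<^sup>2) \<le> norm (K^2 * w t)" using wpos[of t] by simp
      qed
    qed
    show ?thesis using i1 i2 hm' unfolding sq_int_def by auto
  qed
  define S where "S = closure {x. f x \<noteq> 0}"
  have fcont: "continuous_on UNIV f"
    using f_deriv by (meson continuous_at_imp_continuous_on has_vector_derivative_continuous)
  have fmeas: "f \<in> borel_measurable borel" using fcont by (rule borel_measurable_continuous_onI)
  have f0: "\<And>x. x \<notin> S \<Longrightarrow> f x = 0" using closure_subset[of "{x. f x \<noteq> 0}"] unfolding S_def by auto
  have cS: "compact S" using f_supp unfolding S_def .
  obtain R0 where R0: "0 \<le> R0" "\<And>x. x \<in> S \<Longrightarrow> \<bar>x\<bar> \<le> R0"
  proof -
    have "bounded S" using compact_imp_bounded[OF cS] .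
    then obtain a where a: "\<forall>x\<in>S. norm x \<le> a" unfolding bounded_iff by blast
    show ?thesis 
    proof (rule that[of "max a 0"])
      fix x assume "x \<in> S" then show "\<bar>x\<bar> \<le> max a 0" using a by auto
    qed simp
  qed
  have f'0: "f' x = 0" if "x \<notin> S" for x
  proof -
    have "((\<lambda>_. 0::complex) has_vector_derivative 0) (at x)" by simp
    moreover have "open (- S)" unfolding S_def by (simp add: open_Compl)
    ultimately have "(f has_vector_derivative 0) (at x)"
      by (rule has_vector_derivative_transform_within_open[of _ _ _ "- S"])
         (use that f0 in \<open>auto\<close>)
    then show ?thesis by (rule vector_derivative_unique_at[OF f_deriv[of x]])
  qed
  obtain M where M: "0 \<le> M" "\<And>x. cmod (f x) \<le> M"
  proof -
    have "bounded (f ` S)" using compact_continuous_image[OF continuous_on_subset[OF fcont] cS]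
      by (auto intro: compact_imp_bounded)
    then obtain B where B: "\<And>x. x \<in> S \<Longrightarrow> cmod (f x) \<le> B" unfolding bounded_iff by auto
    show ?thesis
    proof (rule that[of "max B 0"])
      fix x show "cmod (f x) \<le> max B 0" using B[of x] f0[of x] by (cases "x \<in> S") auto
    qed simp
  qed
  obtain L where L: "0 \<le> L" "\<And>x. cmod (f' x) \<le> L"
  proof -
    have "bounded (f' ` S)" using compact_continuous_image[OF continuous_on_subset[OF f'_cont] cS]
      by (auto intro: compact_imp_bounded)
    then obtain B where B: "\<And>x. x \<in> S \<Longrightarrow> cmod (f' x) \<le> B" unfolding bounded_iff by auto
    show ?thesis
    proof (rule that[of "max B 0"])
      fix x show "cmod (f' x) \<le> max B 0" using B[of x] f'0[of x] by (cases "x \<in> S") auto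
    qed simp
  qed
  have lip: "\<And>t x. cmod (f t - f x) \<le> L * \<bar>t - x\<bar>" using mvt_bound[OF f_deriv L(2)] .
  have fsq: "sq_int \<mu> f"
  proof -
    have "cmod (f t) \<le> (M * (1 + R0)) * w t" for t
    proof (cases "t \<in> S")
      case True
      have "cmod (f t) \<le> M" by (rule M)
      also have "\<dots> \<le> M * (1 + R0) / (1 + \<bar>t\<bar>)"
      proof -
        have "M * (1 + \<bar>t\<bar>) \<le> M * (1 + R0)" using R0(2)[OF True] M by (intro mult_left_mono) auto
        then show ?thesis by (simp add: field_simps)
      qed
      finally show ?thesis by (simp add: w_def)
    next
      case False
      have "0 \<le> M * (1 + R0) * w t" using M(1) R0(1) wpos(1)[of t] by simp
      then show ?thesis using f0[OF False] by simp
    qed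
    then show ?thesis using dom[OF fmeas] by blast
  qed
  have sq0: "sq_int \<mu> (\<lambda>t. 0::complex)" unfolding sq_int_def by simp
  have V0: "AE s in \<mu>\<alpha>. V (\<lambda>t. 0) s = 0"
  proof -
    have "(\<integral>s. (cmod (V (\<lambda>t. 0) s))\<^sup>2 \<partial>\<mu>\<alpha>) = 0" using V_isometric[OF sq0] by simp
    moreover have "integrable \<mu>\<alpha> (\<lambda>s. (cmod (V (\<lambda>t. 0) s))\<^sup>2)"
      using V_maps[OF sq0] unfolding sq_int_def by simp
    ultimately have "AE s in \<mu>\<alpha>. (cmod (V (\<lambda>t. 0) s))\<^sup>2 = 0"
      by (subst (asm) integral_nonneg_eq_0_iff_AE) auto
    then show ?thesis by eventually_elim simp
  qed
  define k :: "complex \<Rightarrow> real \<Rightarrow> complex" where "k z t = 1 / (complex_of_real t - z)" for z t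
  define F where "F = cauchy_transform \<mu>"
  have Fk: "F z = (\<integral>t. k z t \<partial>\<mu>)" for z unfolding F_def k_def cauchy_transform_def by simp
  have kmeas: "k z \<in> borel_measurable borel" for z unfolding k_def by measurable
  have kne: "complex_of_real t - z \<noteq> 0" if "Im z \<noteq> 0" for z t
    using that by (auto simp: complex_eq_iff)
  have kint: "integrable \<mu> (k z) \<and> sq_int \<mu> (k z)" if "Im z \<noteq> 0" for z
  proof -
    have "\<And>t. cmod (k z t) \<le> (1 + (1 + cmod z) / \<bar>Im z\<bar>) * w t"
      unfolding k_def w_def by (rule kbound[OF that])
    then show ?thesis using dom[OF kmeas] by blast
  qed
  have nz: "1 + \<alpha> * F z \<noteq> 0" if "Im z \<noteq> 0" for z
  proof
    assume h: "1 + \<alpha> * F z = 0"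
    have "res_A_one \<mu> \<alpha> z = (\<lambda>t. 0)" unfolding res_A_one_def F_def[symmetric] h by simp
    then have "AE s in \<mu>\<alpha>. V (\<lambda>t. 0) s = 1 / (complex_of_real s - z)" using V_one[OF that] by simp
    with V0 have "AE s in \<mu>\<alpha>. False" by eventually_elim (use kne[OF that] in simp)
    with notF show False by simp
  qed
  have Vk: "AE s in \<mu>\<alpha>. V (k z) s = (1 + \<alpha> * F z) * k z s" if "Im z \<noteq> 0" for z
  proof -
    have eq: "(\<lambda>t. 0 + 1 / (1 + \<alpha> * F z) * k z t) = res_A_one \<mu> \<alpha> z"
      unfolding res_A_one_def k_def F_def by simp
    have "AE s in \<mu>\<alpha>. V (\<lambda>t. 0 + 1 / (1 + \<alpha> * F z) * k z t) s = V (\<lambda>t. 0) s + 1 / (1 + \<alpha> * F z) * V (k z) s"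
      by (rule V_linear[OF sq0]) (use kint[OF that] in blast)
    then show ?thesis using V0 V_one[OF that] unfolding eq
    proof eventually_elim
      case (elim s)
      then show ?case using nz[OF that] by (simp add: k_def field_simps)
    qed
  qed
  define g :: "real \<Rightarrow> real \<Rightarrow> real \<Rightarrow> complex"
    where "g x \<epsilon> t = (f t - f x) / (complex_of_real t - Complex x \<epsilon>)" for x \<epsilon> t
  define \<Phi> where "\<Phi> x \<epsilon> = f x - complex_of_real \<alpha> * (\<integral>t. g x \<epsilon> t \<partial>\<mu>)" for x \<epsilon>
  define Dq :: "real \<Rightarrow> real \<Rightarrow> complex"
    where "Dq s t = (if t = s then f' s else (f s - f t) / complex_of_real (s - t))" for s t
  define \<Psi> where "\<Psi> s = f s - complex_of_real \<alpha> * (\<integral>t. Dq s t \<partial>\<mu>)" for s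
  define KR where "KR R = L * (2 * R + 3) + 8 * M" for R
  have f2M: "cmod (f t - f x) \<le> 2 * M" for t x
    using norm_triangle_ineq4[of "f t" "f x"] M(2)[of t] M(2)[of x] by simp
  have gmeas: "g x \<epsilon> \<in> borel_measurable borel" for x \<epsilon> unfolding g_def using fmeas by measurable
  have gbound: "cmod (g x \<epsilon> t) \<le> KR R * w t" if "\<bar>x\<bar> \<le> R" "0 \<le> R" "\<epsilon> > 0" for x \<epsilon> t R
  proof -
    have d: "\<bar>t - x\<bar> \<le> cmod (complex_of_real t - Complex x \<epsilon>)"
      using abs_Re_le_cmod[of "complex_of_real t - Complex x \<epsilon>"] by simp
    have dp: "0 < cmod (complex_of_real t - Complex x \<epsilon>)"
      using that by (auto simp: complex_eq_iff)
    have e: "cmod (g x \<epsilon> t) = cmod (f t - f x) / cmod (complex_of_real t - Complex x \<epsilon>)"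
      unfolding g_def by (simp add: norm_divide)
    show ?thesis unfolding KR_def w_def
      by (rule bound_aux[OF L(1) M(1) that(2,1)])
         (use quot_bounds[OF lip f2M d dp L(1)] e in auto)
  qed
  have gint: "integrable \<mu> (g x \<epsilon>) \<and> sq_int \<mu> (g x \<epsilon>)" if "\<epsilon> > 0" for x \<epsilon>
    using dom[OF gmeas gbound[OF order_refl abs_ge_zero that]] by blast
  have Vf_eq: "AE s in \<mu>\<alpha>. V f s = (complex_of_real s - Complex x \<epsilon>) * V (g x \<epsilon>) s + \<Phi> x \<epsilon>"
    if "\<epsilon> > 0" for x \<epsilon>
  proof -
    define z where "z = Complex x \<epsilon>"
    have Imz: "Im z \<noteq> 0" using that by (simp add: z_def)
    define I where "I = (\<integral>u. f u / (complex_of_real u - z) \<partial>\<mu>)"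
    define c where "c = f x - complex_of_real \<alpha> * I / (1 + complex_of_real \<alpha> * F z)"
    have fkint: "integrable \<mu> (\<lambda>u. f u / (complex_of_real u - z))"
    proof -
      have "cmod (f u / (complex_of_real u - z)) \<le> (M * (1 + (1 + cmod z) / \<bar>Im z\<bar>)) * w u" for u
      proof -
        have "cmod (f u / (complex_of_real u - z)) = cmod (f u) * cmod (1 / (complex_of_real u - z))"
          by (simp add: norm_divide)
        also have "\<dots> \<le> M * ((1 + (1 + cmod z) / \<bar>Im z\<bar>) * w u)"
          using kbound[OF Imz, of u] M by (intro mult_mono) (auto simp: w_def)
        finally show ?thesis by simp
      qed
      moreover have "(\<lambda>u. f u / (complex_of_real u - z)) \<in> borel_measurable borel"
        using fmeas by measurable
      ultimately show ?thesis using dom by blast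
    qed
    have geq: "g x \<epsilon> = (\<lambda>u. f u / (complex_of_real u - z) - f x * k z u)"
      by (rule ext) (simp add: g_def k_def z_def diff_divide_distrib)
    have intg: "(\<integral>t. g x \<epsilon> t \<partial>\<mu>) = I - f x * F z"
      unfolding geq I_def Fk using fkint kint[OF Imz] by simp
    have cPhi: "c * (1 + complex_of_real \<alpha> * F z) = \<Phi> x \<epsilon>"
      unfolding c_def \<Phi>_def intg using nz[OF Imz] by (simp add: field_simps)
    have eqres: "res_A \<mu> \<alpha> z f = (\<lambda>t. g x \<epsilon> t + c * k z t)"
    proof (rule ext)
      fix t
      show "res_A \<mu> \<alpha> z f t = g x \<epsilon> t + c * k z t"
        unfolding res_A_def g_def k_def c_def I_def F_def z_def
        by (rule alg1)
    qed
    have "AE s in \<mu>\<alpha>. V (\<lambda>t. g x \<epsilon> t + c * k z t) s = V (g x \<epsilon>) s + c * V (k z) s"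
      by (rule V_linear) (use gint[OF that] kint[OF Imz] in blast)+
    then show ?thesis using V_resolvent[OF Imz fsq] Vk[OF Imz] unfolding eqres
    proof eventually_elim
      case (elim s)
      have ne: "complex_of_real s - z \<noteq> 0" using kne[OF Imz] .
      from elim have "V f s / (complex_of_real s - z) = V (g x \<epsilon>) s + c * ((1 + complex_of_real \<alpha> * F z) * k z s)"
        by simp
      then have "V f s = (complex_of_real s - z) * V (g x \<epsilon>) s + c * (1 + complex_of_real \<alpha> * F z)"
        using ne by (simp add: k_def field_simps)
      then show ?case using cPhi by (simp add: z_def)
    qed
  qed
  define Wr where "Wr = (\<integral>t. w t \<partial>\<mu>)"
  have Wr0: "0 \<le> Wr" unfolding Wr_def using wpos by (intro Bochner_Integration.integral_nonneg less_imp_le) auto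
  have normbound: "(\<integral>\<^sup>+s. ennreal ((cmod (V (g x \<epsilon>) s))\<^sup>2) \<partial>\<mu>\<alpha>) \<le> ennreal ((KR R)\<^sup>2 * Wr)"
    if "\<epsilon> > 0" "\<bar>x\<bar> \<le> R" "0 \<le> R" for x \<epsilon> R
  proof -
    have gs: "sq_int \<mu> (g x \<epsilon>)" using gint[OF that(1)] by blast
    have Vs: "sq_int \<mu>\<alpha> (V (g x \<epsilon>))" using V_maps[OF gs] .
    have "(\<integral>\<^sup>+s. ennreal ((cmod (V (g x \<epsilon>) s))\<^sup>2) \<partial>\<mu>\<alpha>) = ennreal (\<integral>s. (cmod (V (g x \<epsilon>) s))\<^sup>2 \<partial>\<mu>\<alpha>)"
      using Vs unfolding sq_int_def by (intro nn_integral_eq_integral) auto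
    also have "\<dots> = ennreal (\<integral>t. (cmod (g x \<epsilon> t))\<^sup>2 \<partial>\<mu>)" using V_isometric[OF gs] by simp
    also have "\<dots> \<le> ennreal ((KR R)\<^sup>2 * Wr)"
    proof (intro ennreal_leI)
      have "(\<integral>t. (cmod (g x \<epsilon> t))\<^sup>2 \<partial>\<mu>) \<le> (\<integral>t. (KR R)\<^sup>2 * w t \<partial>\<mu>)"
      proof (rule integral_mono)
        show "integrable \<mu> (\<lambda>t. (cmod (g x \<epsilon> t))\<^sup>2)" using gs unfolding sq_int_def by blast
        show "integrable \<mu> (\<lambda>t. (KR R)\<^sup>2 * w t)" using wint by simp
        fix t
        have "(cmod (g x \<epsilon> t))\<^sup>2 \<le> (KR R * w t)\<^sup>2"
          using gbound[OF that(2,3,1), of t] by (intro power_mono) auto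
        also have "\<dots> = (KR R)\<^sup>2 * (w t * w t)" by (simp add: power2_eq_square)
        also have "\<dots> \<le> (KR R)\<^sup>2 * w t"
          using wpos[of t] by (intro mult_left_mono) (auto simp: mult_le_cancel_left1)
        finally show "(cmod (g x \<epsilon> t))\<^sup>2 \<le> (KR R)\<^sup>2 * w t" .
      qed
      also have "\<dots> = (KR R)\<^sup>2 * Wr" unfolding Wr_def by simp
      finally show "(\<integral>t. (cmod (g x \<epsilon> t))\<^sup>2 \<partial>\<mu>) \<le> (KR R)\<^sup>2 * Wr" .
    qed
    finally show ?thesis .
  qed
  have Vfm[measurable]: "V f \<in> borel_measurable \<mu>\<alpha>" using V_maps[OF fsq] unfolding sq_int_def by blast
  have idm[measurable]: "(\<lambda>s::real. s) \<in> borel_measurable \<mu>\<alpha>" by (simp add: mcong2)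
  have markov: "emeasure \<mu>\<alpha> {s \<in> space \<mu>\<alpha>. a \<le> s \<and> s \<le> b \<and> \<delta> < cmod (V f s - \<Phi> x \<epsilon>)}
      \<le> ennreal (2 * \<eta>\<^sup>2 * ((KR R)\<^sup>2 * Wr) / \<delta>\<^sup>2)"
    if "\<epsilon> > 0" "\<epsilon> \<le> \<eta>" "\<bar>x\<bar> \<le> R" "0 \<le> R" "a \<le> x" "x \<le> b" "b - a \<le> \<eta>" "\<delta> > 0"
    for x \<epsilon> R a b \<eta> \<delta>
  proof -
    define S where "S = {s \<in> space \<mu>\<alpha>. a \<le> s \<and> s \<le> b \<and> \<delta> < cmod (V f s - \<Phi> x \<epsilon>)}"
    have Sm: "S \<in> sets \<mu>\<alpha>" unfolding S_def by measurable
    define p where "p = \<delta>\<^sup>2 / (2 * \<eta>\<^sup>2)"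
    have \<eta>p: "\<eta> > 0" using that by linarith
    have p0: "p > 0" unfolding p_def using \<eta>p that by simp
    have "ennreal p * emeasure \<mu>\<alpha> S = (\<integral>\<^sup>+s. ennreal p * indicator S s \<partial>\<mu>\<alpha>)"
      using Sm by (simp add: nn_integral_cmult_indicator)
    also have "\<dots> \<le> (\<integral>\<^sup>+s. ennreal ((cmod (V (g x \<epsilon>) s))\<^sup>2) \<partial>\<mu>\<alpha>)"
    proof (rule nn_integral_mono_AE)
      show "AE s in \<mu>\<alpha>. ennreal p * indicator S s \<le> ennreal ((cmod (V (g x \<epsilon>) s))\<^sup>2)"
        using Vf_eq[OF that(1), of x]
      proof eventually_elim
        case (elim s)
        show ?case
        proof (cases "s \<in> S")
          case False then show ?thesis by simp
        next
          case True
          define d where "d = complex_of_real s - Complex x \<epsilon>"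
          have dn: "d \<noteq> 0" unfolding d_def using that(1) by (auto simp: complex_eq_iff)
          have Vg: "V (g x \<epsilon>) s = (V f s - \<Phi> x \<epsilon>) / d" using elim dn unfolding d_def[symmetric]
            by (simp add: field_simps)
          have sx: "\<bar>s - x\<bar> \<le> \<eta>" using True that unfolding S_def by auto
          have "(cmod d)\<^sup>2 = (s - x)\<^sup>2 + \<epsilon>\<^sup>2" unfolding d_def cmod_power2 by simp
          also have "\<dots> \<le> \<eta>\<^sup>2 + \<eta>\<^sup>2"
          proof (rule add_mono)
            have "\<bar>s - x\<bar>\<^sup>2 \<le> \<eta>\<^sup>2" using sx by (intro power_mono) auto
            then show "(s - x)\<^sup>2 \<le> \<eta>\<^sup>2" by simp
            show "\<epsilon>\<^sup>2 \<le> \<eta>\<^sup>2" using that by (intro power_mono) auto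
          qed
          finally have d2: "(cmod d)\<^sup>2 \<le> 2 * \<eta>\<^sup>2" by simp
          have dp: "0 < (cmod d)\<^sup>2" using dn by simp
          have del: "\<delta>\<^sup>2 \<le> (cmod (V f s - \<Phi> x \<epsilon>))\<^sup>2"
            using True that unfolding S_def by (intro power_mono) auto
          have "p \<le> (cmod (V f s - \<Phi> x \<epsilon>))\<^sup>2 / (cmod d)\<^sup>2"
            unfolding p_def using d2 dp del that by (intro frac_le) auto
          also have "\<dots> = (cmod (V (g x \<epsilon>) s))\<^sup>2" unfolding Vg by (simp add: norm_divide power_divide)
          finally show ?thesis using True by (simp add: ennreal_leI)
        qed
      qed
    qed
    also have "\<dots> \<le> ennreal ((KR R)\<^sup>2 * Wr)" by (rule normbound[OF that(1,3,4)])
    finally have le: "ennreal p * emeasure \<mu>\<alpha> S \<le> ennreal ((KR R)\<^sup>2 * Wr)" .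
    have "emeasure \<mu>\<alpha> S = ennreal (1 / p) * (ennreal p * emeasure \<mu>\<alpha> S)"
      using p0 by (simp add: mult.assoc[symmetric] ennreal_mult[symmetric])
    also have "\<dots> \<le> ennreal (1 / p) * ennreal ((KR R)\<^sup>2 * Wr)" by (rule mult_left_mono[OF le]) simp
    also have "\<dots> \<le> ennreal (2 * \<eta>\<^sup>2 * ((KR R)\<^sup>2 * Wr) / \<delta>\<^sup>2)"
    proof -
      have "0 \<le> (KR R)\<^sup>2 * Wr" using Wr0 by simp
      then show ?thesis using p0 by (simp add: ennreal_mult[symmetric] p_def)
    qed
    finally show ?thesis unfolding S_def .
  qed
  have Dqmeas: "Dq s \<in> borel_measurable borel" for s unfolding Dq_def using fmeas by measurable
  have Dqbound: "cmod (Dq s t) \<le> KR R * w t" if "\<bar>s\<bar> \<le> R" "0 \<le> R" for s t R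
  proof -
    have a: "cmod (Dq s t) \<le> L"
    proof (cases "t = s")
      case True then show ?thesis using L(2) by (simp add: Dq_def)
    next
      case False
      then have p: "0 < \<bar>s - t\<bar>" by simp
      have "cmod (Dq s t) = cmod (f s - f t) / \<bar>s - t\<bar>" using False
        by (simp add: Dq_def norm_divide del: of_real_diff)
      also have "\<dots> \<le> L" using lip[of s t] p by (simp add: field_simps)
      finally show ?thesis .
    qed
    have b: "cmod (Dq s t) \<le> 2 * M / \<bar>t - s\<bar>" if "t \<noteq> s"
    proof -
      have "cmod (Dq s t) = cmod (f s - f t) / \<bar>t - s\<bar>" using that
        by (simp add: Dq_def norm_divide abs_minus_commute del: of_real_diff)
      also have "\<dots> \<le> 2 * M / \<bar>t - s\<bar>" using f2M[of s t] by (intro divide_right_mono) auto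
      finally show ?thesis .
    qed
    show ?thesis unfolding KR_def w_def by (rule bound_aux[OF L(1) M(1) that(2,1) a b])
  qed
  have Dqcont: "isCont (\<lambda>s. Dq s t) s0" for s0 t
  proof (cases "s0 = t")
    case False
    have ev: "eventually (\<lambda>s. Dq s t = (f s - f t) / complex_of_real (s - t)) (nhds s0)"
    proof -
      have "eventually (\<lambda>s. s \<noteq> t) (nhds s0)" using False by (intro t1_space_nhds) 
      then show ?thesis by eventually_elim (simp add: Dq_def)
    qed
    have "isCont (\<lambda>s. (f s - f t) / complex_of_real (s - t)) s0"
      using False fcont by (intro continuous_intros) (auto simp: continuous_on_eq_continuous_at)
    then show ?thesis using isCont_cong[OF ev] by simp
  next
    case True
    have "((\<lambda>s. (f s - f t) / complex_of_real (s - t)) \<longlongrightarrow> f' t) (at t)"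
      by (rule quot_tendsto[OF f_deriv])
    then have "((\<lambda>s. Dq s t) \<longlongrightarrow> f' t) (at t)"
    proof (rule Lim_transform_eventually)
      show "\<forall>\<^sub>F s in at t. (f s - f t) / complex_of_real (s - t) = Dq s t"
        unfolding eventually_at_filter by (intro always_eventually) (auto simp: Dq_def)
    qed
    then show ?thesis using True by (simp add: isCont_def Dq_def)
  qed
  have Psi_cont: "continuous_on {-R..R} \<Psi>" if "0 \<le> R" for R
  proof (rule continuous_on_sequentiallyI)
    fix u :: "nat \<Rightarrow> real" and a assume u: "\<forall>n. u n \<in> {-R..R}" "a \<in> {-R..R}" "u \<longlonglongrightarrow> a"
    have "(\<lambda>n. \<integral>t. Dq (u n) t \<partial>\<mu>) \<longlonglongrightarrow> (\<integral>t. Dq a t \<partial>\<mu>)"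
    proof (rule integral_dominated_convergence[where w = "\<lambda>t. KR R * w t"])
      show "Dq a \<in> borel_measurable \<mu>" using Dqmeas by (simp add: mcong)
      show "Dq (u n) \<in> borel_measurable \<mu>" for n using Dqmeas by (simp add: mcong)
      show "integrable \<mu> (\<lambda>t. KR R * w t)" using wint by simp
      show "AE t in \<mu>. (\<lambda>n. Dq (u n) t) \<longlonglongrightarrow> Dq a t"
        by (intro AE_I2 isCont_tendsto_compose[OF Dqcont u(3)])
      show "AE t in \<mu>. norm (Dq (u n) t) \<le> KR R * w t" for n
        using u(1)[rule_format, of n] that by (intro AE_I2 Dqbound) (auto simp: abs_le_iff)
    qed
    moreover have "(\<lambda>n. f (u n)) \<longlonglongrightarrow> f a"
      using fcont u(3) by (intro isCont_tendsto_compose[of a f]) (auto simp: continuous_on_eq_continuous_at)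
    ultimately show "(\<lambda>n. \<Psi> (u n)) \<longlonglongrightarrow> \<Psi> a" unfolding \<Psi>_def by (intro tendsto_intros)
  qed
  have Phi_lim: "(\<lambda>n. \<Phi> x (inverse (real (Suc n)))) \<longlonglongrightarrow> \<Psi> x" if "emeasure \<mu> {x} = 0" for x
  proof -
    have "(\<lambda>n. \<integral>t. g x (inverse (real (Suc n))) t \<partial>\<mu>) \<longlonglongrightarrow> (\<integral>t. Dq x t \<partial>\<mu>)"
    proof (rule integral_dominated_convergence[where w = "\<lambda>t. KR \<bar>x\<bar> * w t"])
      show "Dq x \<in> borel_measurable \<mu>" using Dqmeas by (simp add: mcong)
      show "g x (inverse (real (Suc n))) \<in> borel_measurable \<mu>" for n using gmeas by (simp add: mcong)
      show "integrable \<mu> (\<lambda>t. KR \<bar>x\<bar> * w t)" using wint by simp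
      show "AE t in \<mu>. norm (g x (inverse (real (Suc n))) t) \<le> KR \<bar>x\<bar> * w t" for n
        by (intro AE_I2 gbound) auto
      have "{x} \<in> sets \<mu>" by (simp add: mu_borel)
      then have "{x} \<in> null_sets \<mu>" using that by (simp add: null_sets_def)
      then have nx: "AE t in \<mu>. t \<noteq> x"
        by (rule AE_I') blast
      then show "AE t in \<mu>. (\<lambda>n. g x (inverse (real (Suc n))) t) \<longlonglongrightarrow> Dq x t"
      proof eventually_elim
        case (elim t)
        have l: "(\<lambda>n. Complex x (inverse (real (Suc n)))) \<longlonglongrightarrow> Complex x 0"
          by (intro tendsto_intros LIMSEQ_inverse_real_of_nat)
        have "(\<lambda>n. (f t - f x) / (complex_of_real t - Complex x (inverse (real (Suc n)))))
            \<longlonglongrightarrow> (f t - f x) / (complex_of_real t - Complex x 0)"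
          using elim by (intro tendsto_intros l) (auto simp: complex_eq_iff)
        moreover have "(f t - f x) / (complex_of_real t - Complex x 0) = Dq x t"
        proof -
          have "Complex x 0 = complex_of_real x" by (simp add: Complex_eq)
          moreover have "(f t - f x) / (complex_of_real t - complex_of_real x) = (f x - f t) / (complex_of_real x - complex_of_real t)"
            by (metis minus_diff_eq minus_divide_divide)
          ultimately show ?thesis using elim by (simp add: Dq_def)
        qed
        ultimately show ?case unfolding g_def by simp
      qed
    qed
    then show ?thesis unfolding \<Phi>_def \<Psi>_def by (intro tendsto_intros)
  qed
  have wm[measurable]: "w \<in> borel_measurable \<mu>" using wmeas by (simp add: mcong)
  have nonatom: "\<exists>x\<in>{a<..<b}. emeasure \<mu> {x} = 0" if "a < b" for a b
  proof -
    define c where "c = 1 + max \<bar>a\<bar> \<bar>b\<bar>"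
    have sab: "{a..b} \<in> sets \<mu>" by (simp add: mu_borel)
    have fin: "emeasure \<mu> {a..b} < \<infinity>"
    proof -
      have "emeasure \<mu> {a..b} = (\<integral>\<^sup>+t. indicator {a..b} t \<partial>\<mu>)" using sab by simp
      also have "\<dots> \<le> (\<integral>\<^sup>+t. ennreal c * ennreal (w t) \<partial>\<mu>)"
      proof (rule nn_integral_mono)
        fix t
        show "indicator {a..b} t \<le> ennreal c * ennreal (w t)"
        proof (cases "t \<in> {a..b}")
          case True
          then have "1 + \<bar>t\<bar> \<le> c" unfolding c_def by auto
          then have "1 \<le> c * w t" unfolding w_def by (simp add: field_simps)
          then have "ennreal 1 \<le> ennreal (c * w t)" by (rule ennreal_leI)
          moreover have "ennreal c * ennreal (w t) = ennreal (c * w t)"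
            using wpos[of t] by (simp add: ennreal_mult c_def)
          ultimately show ?thesis using True by simp
        qed simp
      qed
      also have "\<dots> = ennreal c * (\<integral>\<^sup>+t. ennreal (w t) \<partial>\<mu>)" by (rule nn_integral_cmult) measurable
      also have "\<dots> < \<infinity>" using mu_growth by (simp add: w_def ennreal_mult_less_top)
      finally show ?thesis .
    qed
    define Mr where "Mr = restrict_space \<mu> {a..b}"
    have sab': "{a..b} \<inter> space \<mu> \<in> sets \<mu>" using sab by (simp add: space_mu)
    have fm: "finite_measure Mr"
    proof (rule finite_measureI)
      have "space Mr = {a..b}" unfolding Mr_def by (simp add: space_restrict_space space_mu)
      then show "emeasure Mr (space Mr) \<noteq> \<infinity>" using fin emeasure_restrict_space[OF sab', of "{a..b}"]
        unfolding Mr_def by simp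
    qed
    have cnt: "countable {x. measure Mr {x} \<noteq> 0}" by (rule finite_measure.countable_support[OF fm])
    have unc: "uncountable {a<..<b}" using that by (simp add: uncountable_open_interval)
    have "\<not> {a<..<b} \<subseteq> {x. measure Mr {x} \<noteq> 0}" using cnt unc countable_subset by blast
    then obtain x where x: "x \<in> {a<..<b}" "measure Mr {x} = 0" by blast
    have xsub: "{x} \<subseteq> {a..b}" using x by auto
    have m0: "measure \<mu> {x} = 0" using x measure_restrict_space[OF sab' xsub] unfolding Mr_def by simp
    have "emeasure \<mu> {x} \<le> emeasure \<mu> {a..b}" by (rule emeasure_mono[OF xsub sab])
    then have "emeasure \<mu> {x} \<noteq> \<infinity>" using fin by auto
    then have "emeasure \<mu> {x} = 0" using m0 emeasure_eq_ennreal_measure by fastforce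
    then show ?thesis using x by blast
  qed
  have Psimeas: "\<Psi> \<in> borel_measurable borel"
  proof -
    have "continuous_on UNIV \<Psi>"
    proof (rule continuous_at_imp_continuous_on, intro ballI)
      fix x :: real
      have "continuous_on {-(\<bar>x\<bar>+1)..\<bar>x\<bar>+1} \<Psi>" by (rule Psi_cont) simp
      then show "isCont \<Psi> x" by (rule continuous_on_interior) auto
    qed
    then show ?thesis by (rule borel_measurable_continuous_onI)
  qed
  have Psim2[measurable]: "\<Psi> \<in> borel_measurable \<mu>\<alpha>" using Psimeas by (simp add: mcong2)
  have bad0: "emeasure \<mu>\<alpha> {s \<in> space \<mu>\<alpha>. -R \<le> s \<and> s \<le> R \<and> 3 * \<delta> < cmod (V f s - \<Psi> s)} = 0"
    if R0: "0 \<le> R" and d0: "\<delta> > 0" for R \<delta>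
  proof -
    define B where "B = {s \<in> space \<mu>\<alpha>. -R \<le> s \<and> s \<le> R \<and> 3 * \<delta> < cmod (V f s - \<Psi> s)}"
    define R' where "R' = R + 2"
    have R'0: "0 \<le> R'" using R0 by (simp add: R'_def)
    have Bm: "B \<in> sets \<mu>\<alpha>" unfolding B_def by measurable
    have "uniformly_continuous_on {-R'..R'} \<Psi>"
      by (rule compact_uniformly_continuous[OF Psi_cont[OF R'0] compact_Icc])
    then obtain \<eta>0 where \<eta>0: "\<eta>0 > 0"
      "\<And>s y. s \<in> {-R'..R'} \<Longrightarrow> y \<in> {-R'..R'} \<Longrightarrow> dist s y < \<eta>0 \<Longrightarrow> dist (\<Psi> s) (\<Psi> y) < \<delta>"
      unfolding uniformly_continuous_on_def using d0 by metis
    define Q where "Q = (KR R')\<^sup>2 * Wr"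
    have Q0: "0 \<le> Q" unfolding Q_def using Wr0 by simp
    define C0 where "C0 = (2 * R + 2) * (2 * Q / \<delta>\<^sup>2)"
    have C00: "0 \<le> C0" unfolding C0_def using R0 Q0 by simp
    have eps: "emeasure \<mu>\<alpha> B \<le> 0 + ennreal e" if e0: "e > 0" for e
    proof -
      define \<eta> where "\<eta> = min (\<eta>0 / 2) (min 1 (e / (C0 + 1)))"
      have \<eta>p: "\<eta> > 0" unfolding \<eta>_def using \<eta>0 e0 C00 by simp
      have \<eta>1: "\<eta> \<le> 1" "\<eta> < \<eta>0" unfolding \<eta>_def using \<eta>0 by auto
      have \<eta>C: "\<eta> * C0 \<le> e"
      proof -
        have "\<eta> \<le> e / (C0 + 1)" unfolding \<eta>_def by simp
        then have "\<eta> * C0 \<le> e / (C0 + 1) * C0" using C00 by (intro mult_right_mono) auto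
        also have "\<dots> \<le> e" using C00 e0 by (simp add: field_simps)
        finally show ?thesis .
      qed
      define N where "N = nat \<lceil>2 * R / \<eta>\<rceil> + 1"
      have q: "0 \<le> 2 * R / \<eta>" using R0 \<eta>p by simp
      have rN: "real N = of_int \<lceil>2 * R / \<eta>\<rceil> + 1" unfolding N_def using q by simp
      have Nle: "real N \<le> 2 * R / \<eta> + 2" unfolding rN using of_int_ceiling_le_add_one[of "2 * R / \<eta>"] by linarith
      have Nge: "2 * R / \<eta> < real N" unfolding rN using le_of_int_ceiling[of "2 * R / \<eta>"] by linarith
      have "\<forall>j. \<exists>x. x \<in> {-R + real j * \<eta> <..< -R + real (Suc j) * \<eta>} \<and> emeasure \<mu> {x} = 0"
      proof
        fix j
        have "-R + real j * \<eta> < -R + real (Suc j) * \<eta>" using \<eta>p by (simp add: algebra_simps)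
        from nonatom[OF this] show "\<exists>x. x \<in> {-R + real j * \<eta> <..< -R + real (Suc j) * \<eta>} \<and> emeasure \<mu> {x} = 0"
          by blast
      qed
      then obtain xs where xs: "\<And>j. xs j \<in> {-R + real j * \<eta> <..< -R + real (Suc j) * \<eta>}"
        "\<And>j. emeasure \<mu> {xs j} = 0" by metis
      have xsR: "\<bar>xs j\<bar> \<le> R'" if "j < N" for j
      proof -
        have "real (Suc j) \<le> real N" using that by simp
        then have "real (Suc j) * \<eta> \<le> real N * \<eta>" using \<eta>p by (intro mult_right_mono) auto
        also have "\<dots> \<le> (2 * R / \<eta> + 2) * \<eta>" using Nle \<eta>p by (intro mult_right_mono) auto
        also have "\<dots> = 2 * R + 2 * \<eta>" using \<eta>p by (simp add: field_simps)
        finally have "real (Suc j) * \<eta> \<le> 2 * R + 2 * \<eta>" .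
        moreover have "0 \<le> real j * \<eta>" using \<eta>p by simp
        ultimately show ?thesis using xs(1)[of j] \<eta>1 unfolding R'_def by auto
      qed
      have "\<forall>j. \<exists>\<epsilon>. 0 < \<epsilon> \<and> \<epsilon> \<le> \<eta> \<and> cmod (\<Phi> (xs j) \<epsilon> - \<Psi> (xs j)) < \<delta>"
      proof
        fix j
        have "eventually (\<lambda>n. dist (\<Phi> (xs j) (inverse (real (Suc n)))) (\<Psi> (xs j)) < \<delta>) sequentially"
          using Phi_lim[OF xs(2)[of j]] d0 by (rule tendstoD)
        moreover have "eventually (\<lambda>n. inverse (real (Suc n)) < \<eta>) sequentially"
          using LIMSEQ_inverse_real_of_nat \<eta>p by (rule order_tendstoD)
        ultimately have "eventually (\<lambda>n. dist (\<Phi> (xs j) (inverse (real (Suc n)))) (\<Psi> (xs j)) < \<delta>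
            \<and> inverse (real (Suc n)) < \<eta>) sequentially" by (rule eventually_conj)
        then obtain n where "dist (\<Phi> (xs j) (inverse (real (Suc n)))) (\<Psi> (xs j)) < \<delta>"
          "inverse (real (Suc n)) < \<eta>" by (auto simp: eventually_sequentially)
        then show "\<exists>\<epsilon>. 0 < \<epsilon> \<and> \<epsilon> \<le> \<eta> \<and> cmod (\<Phi> (xs j) \<epsilon> - \<Psi> (xs j)) < \<delta>"
          by (intro exI[of _ "inverse (real (Suc n))"]) (auto simp: dist_norm)
      qed
      then obtain es where es: "\<And>j. 0 < es j" "\<And>j. es j \<le> \<eta>"
        "\<And>j. cmod (\<Phi> (xs j) (es j) - \<Psi> (xs j)) < \<delta>" by metis
      define Sj where "Sj j = {s \<in> space \<mu>\<alpha>. -R + real j * \<eta> \<le> s \<and> s \<le> -R + real (Suc j) * \<eta>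
          \<and> \<delta> < cmod (V f s - \<Phi> (xs j) (es j))}" for j
      have Sjm: "Sj j \<in> sets \<mu>\<alpha>" for j unfolding Sj_def by measurable
      have sub: "B \<subseteq> (\<Union>j<N. Sj j)"
      proof
        fix s assume sB: "s \<in> B"
        then have sR: "-R \<le> s" "s \<le> R" and big: "3 * \<delta> < cmod (V f s - \<Psi> s)" unfolding B_def by auto
        define j where "j = nat \<lfloor>(s + R) / \<eta>\<rfloor>"
        have q0: "0 \<le> (s + R) / \<eta>" using sR \<eta>p by simp
        have jle: "real j \<le> (s + R) / \<eta>" "(s + R) / \<eta> < real j + 1" unfolding j_def using q0 by linarith+
        have jlo: "-R + real j * \<eta> \<le> s" using jle(1) \<eta>p by (simp add: field_simps)
        have jhi: "s < -R + real (Suc j) * \<eta>" using jle(2) \<eta>p by (simp add: field_simps)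
        have "(s + R) / \<eta> \<le> 2 * R / \<eta>" using sR \<eta>p by (intro divide_right_mono) auto
        then have jN: "j < N" using jle(1) Nge by linarith
        have sx: "\<bar>s - xs j\<bar> < \<eta>" using xs(1)[of j] jlo jhi by (auto simp: algebra_simps abs_less_iff)
        have sR': "s \<in> {-R'..R'}" using sR unfolding R'_def by auto
        have xR': "xs j \<in> {-R'..R'}" using xsR[OF jN] by auto
        have c1: "cmod (\<Psi> s - \<Psi> (xs j)) < \<delta>"
          using \<eta>0(2)[OF sR' xR'] sx \<eta>1 by (simp add: dist_norm)
        have "cmod (V f s - \<Psi> s) \<le> cmod (V f s - \<Phi> (xs j) (es j)) + cmod (\<Phi> (xs j) (es j) - \<Psi> (xs j))
            + cmod (\<Psi> (xs j) - \<Psi> s)"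
          using norm_triangle_ineq[of "V f s - \<Phi> (xs j) (es j)" "\<Phi> (xs j) (es j) - \<Psi> (xs j)"]
            norm_triangle_ineq[of "V f s - \<Psi> (xs j)" "\<Psi> (xs j) - \<Psi> s"] by simp
        then have "\<delta> < cmod (V f s - \<Phi> (xs j) (es j))"
          using big c1 es(3)[of j] by (simp add: norm_minus_commute)
        then have "s \<in> Sj j" unfolding Sj_def using jlo jhi sB unfolding B_def by auto
        then show "s \<in> (\<Union>j<N. Sj j)" using jN by blast
      qed
      have "emeasure \<mu>\<alpha> B \<le> emeasure \<mu>\<alpha> (\<Union>j<N. Sj j)"
        by (rule emeasure_mono[OF sub]) (use Sjm in auto)
      also have "\<dots> \<le> (\<Sum>j<N. emeasure \<mu>\<alpha> (Sj j))"
        by (rule emeasure_subadditive_finite) (use Sjm in auto)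
      also have "\<dots> \<le> (\<Sum>j<N. ennreal (2 * \<eta>\<^sup>2 * Q / \<delta>\<^sup>2))"
      proof (rule sum_mono)
        fix j assume "j \<in> {..<N}"
        then have jN: "j < N" by simp
        show "emeasure \<mu>\<alpha> (Sj j) \<le> ennreal (2 * \<eta>\<^sup>2 * Q / \<delta>\<^sup>2)"
          unfolding Sj_def Q_def
          by (rule markov[OF es(1) es(2) xsR[OF jN] R'0])
             (use xs(1)[of j] d0 in \<open>auto simp: algebra_simps\<close>)
      qed
      also have "\<dots> = ennreal (\<Sum>j<N. 2 * \<eta>\<^sup>2 * Q / \<delta>\<^sup>2)" by (rule sum_ennreal) (use Q0 in simp)
      also have "\<dots> = ennreal (real N * (2 * \<eta>\<^sup>2 * Q / \<delta>\<^sup>2))" by simp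
      also have "\<dots> \<le> ennreal e"
      proof (rule ennreal_leI)
        have "real N * \<eta> \<le> (2 * R / \<eta> + 2) * \<eta>" using Nle \<eta>p by (intro mult_right_mono) auto
        also have "\<dots> = 2 * R + 2 * \<eta>" using \<eta>p by (simp add: field_simps)
        also have "\<dots> \<le> 2 * R + 2" using \<eta>1 by simp
        finally have Ne: "real N * \<eta> \<le> 2 * R + 2" .
        have "real N * (2 * \<eta>\<^sup>2 * Q / \<delta>\<^sup>2) = (real N * \<eta>) * (\<eta> * (2 * Q / \<delta>\<^sup>2))"
          by (simp add: power2_eq_square)
        also have "\<dots> \<le> (2 * R + 2) * (\<eta> * (2 * Q / \<delta>\<^sup>2))"
          using Ne \<eta>p Q0 by (intro mult_right_mono) auto
        also have "\<dots> = \<eta> * C0" unfolding C0_def by simp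
        also have "\<dots> \<le> e" by (rule \<eta>C)
        finally show "real N * (2 * \<eta>\<^sup>2 * Q / \<delta>\<^sup>2) \<le> e" .
      qed
      finally show ?thesis by simp
    qed
    have "emeasure \<mu>\<alpha> B \<le> 0" by (rule ennreal_le_epsilon) (rule eps)
    then show ?thesis unfolding B_def by simp
  qed
  define Bn where "Bn n m = {s \<in> space \<mu>\<alpha>. -real n \<le> s \<and> s \<le> real n \<and>
      3 * inverse (real (Suc m)) < cmod (V f s - \<Psi> s)}" for n m :: nat
  have Bnull: "(\<Union>n. \<Union>m. Bn n m) \<in> null_sets \<mu>\<alpha>"
  proof (intro null_sets_UN)
    fix n m
    have "Bn n m \<in> sets \<mu>\<alpha>" unfolding Bn_def by measurable
    moreover have "emeasure \<mu>\<alpha> (Bn n m) = 0" unfolding Bn_def by (rule bad0) auto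
    ultimately show "Bn n m \<in> null_sets \<mu>\<alpha>" by (simp add: null_sets_def)
  qed
  have "AE s in \<mu>\<alpha>. V f s = \<Psi> s"
  proof (rule AE_I'[OF Bnull])
    show "{s \<in> space \<mu>\<alpha>. \<not> V f s = \<Psi> s} \<subseteq> (\<Union>n. \<Union>m. Bn n m)"
    proof
      fix s assume s: "s \<in> {s \<in> space \<mu>\<alpha>. \<not> V f s = \<Psi> s}"
      then have "0 < cmod (V f s - \<Psi> s) / 3" by simp
      then obtain m where m: "inverse (real (Suc m)) < cmod (V f s - \<Psi> s) / 3"
        using reals_Archimedean by blast
      obtain n :: nat where n: "\<bar>s\<bar> \<le> real n" using real_arch_simple by blast
      have "s \<in> Bn n m" using s m n unfolding Bn_def by (auto simp: abs_le_iff)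
      then show "s \<in> (\<Union>n. \<Union>m. Bn n m)" by blast
    qed
  qed
  then show ?thesis unfolding \<Psi>_def Dq_def .
qed

end
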